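(* Let $a\in \mathcal{A}$ have $w$-weighted core inverse $x$. Then $a$ has a $w$-weighted generalized core-EP inverse and $a^{\mathrm{gcEP},w}=x$.
   Context: $\mathcal{A}$ is a complex Banach *-algebra with identity and $w\in\mathcal{A}$. The $w$-weighted core inverse of $a$ is the unique $x$ with $a(wx)^2=x$, $(wawx)^*=wawx$, $xw(aw)^2=aw$. The $w$-weighted generalized core-EP inverse of $a$ is the unique $x$ with $a(wx)^2=x$, $(wawx)^*=wawx$, $\lim_{n\to\infty}\|(aw)^n-(xw)(aw)^{n+1}\|^{1/n}=0$, denoted $a^{\mathrm{gcEP},w}$. *)

theory Defs
  imports "HOL-Analysis.Analysis"
begin

text \<open>A complex Banach *-algebra with identity: the carrier type is a real Banach algebra
with unit; the complex scalar multiplication scC (extending the real one) and the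
involution st are given explicitly.\<close>

definition complex_banach_star_algebra ::
  "(complex \<Rightarrow> 'a::{real_normed_algebra_1,banach} \<Rightarrow> 'a) \<Rightarrow> ('a \<Rightarrow> 'a) \<Rightarrow> bool" where
  "complex_banach_star_algebra scC st \<longleftrightarrow>
     (\<forall>c d x. scC (c + d) x = scC c x + scC d x) \<and>
     (\<forall>c x y. scC c (x + y) = scC c x + scC c y) \<and>
     (\<forall>c d x. scC (c * d) x = scC c (scC d x)) \<and>
     (\<forall>r x. scC (complex_of_real r) x = scaleR r x) \<and>
     (\<forall>c x. norm (scC c x) = cmod c * norm x) \<and>
     (\<forall>c x y. scC c (x * y) = scC c x * y \<and> scC c (x * y) = x * scC c y) \<and>
     (\<forall>x. st (st x) = x) \<and>
     (\<forall>x y. st (x + y) = st x + st y) \<and>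
     (\<forall>x y. st (x * y) = st y * st x) \<and>
     (\<forall>c x. st (scC c x) = scC (cnj c) (st x))"

definition w_core_inv :: "('a::real_normed_algebra_1 \<Rightarrow> 'a) \<Rightarrow> 'a \<Rightarrow> 'a \<Rightarrow> 'a \<Rightarrow> bool" where
  "w_core_inv st w a x \<longleftrightarrow>
     a * (w * x)^2 = x \<and> st (w * a * w * x) = w * a * w * x \<and> x * w * (a * w)^2 = a * w"

definition w_gcEP_inv :: "('a::real_normed_algebra_1 \<Rightarrow> 'a) \<Rightarrow> 'a \<Rightarrow> 'a \<Rightarrow> 'a \<Rightarrow> bool" where
  "w_gcEP_inv st w a x \<longleftrightarrow>
     a * (w * x)^2 = x \<and> st (w * a * w * x) = w * a * w * x \<and>
     (\<lambda>n. root n (norm ((a * w)^n - (x * w) * (a * w)^(n+1)))) \<longlonglongrightarrow> 0"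

definition w_gcEP :: "('a::real_normed_algebra_1 \<Rightarrow> 'a) \<Rightarrow> 'a \<Rightarrow> 'a \<Rightarrow> 'a" where
  "w_gcEP st w a = (THE x. w_gcEP_inv st w a x)"

end

theory Submission
  imports Defs
begin

lemma analytic_zero:
  fixes c M t :: real and e :: "nat \<Rightarrow> real"
  assumes c0: "0 \<le> c" and M0: "0 \<le> M" and t0: "0 \<le> t" and e0: "\<And>n. 0 \<le> e n"
    and lim: "(\<lambda>n. root n (e n)) \<longlonglongrightarrow> 0"
    and bd: "\<And>n. c \<le> M * e n * t ^ n"
  shows "c = 0"
proof (rule ccontr)
  assume "c \<noteq> 0"
  hence cp: "0 < c" using c0 by simp
  have Mp: "0 < M"
  proof (rule ccontr)
    assume "\<not> 0 < M" hence "M = 0" using M0 by simp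
    thus False using bd[of 0] cp by simp
  qed
  have L1: "(\<lambda>n. root n c) \<longlonglongrightarrow> 1" by (rule LIMSEQ_root_const[OF cp])
  have L2: "(\<lambda>n. root n M * root n (e n) * t) \<longlonglongrightarrow> 1 * 0 * t"
    by (intro tendsto_intros LIMSEQ_root_const[OF Mp] lim)
  have ev: "\<forall>n\<ge>1. root n c \<le> root n M * root n (e n) * t"
  proof (intro allI impI)
    fix n :: nat assume "1 \<le> n" hence np: "0 < n" by simp
    have "root n c \<le> root n (M * e n * t ^ n)"
      using bd[of n] np by simp
    also have "\<dots> = root n M * root n (e n) * t"
      using np t0 by (simp add: real_root_mult real_root_power_cancel)
    finally show "root n c \<le> root n M * root n (e n) * t" .
  qed
  have "1 \<le> 1 * 0 * t"
    by (rule LIMSEQ_le[OF L1 L2]) (use ev in blast)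
  thus False by simp
qed

lemma core_facts:
  fixes a w x :: "'a::real_normed_algebra_1"
  assumes c1: "a * (w * (x * (w * x))) = x" and c3: "x * (w * (a * (w * (a * w)))) = a * w"
  shows "x * (w * (a * (w * x))) = x"
    and "a * (w * (x * (w * (a * w)))) = a * w"
    and "a * w * (x * w) * (x * w) = x * w"
proof -
  have "x * (w * (a * (w * x))) = x * (w * (a * (w * (a * (w * (x * (w * x)))))))"
    using c1 by simp
  also have "\<dots> = (x * (w * (a * (w * (a * w))))) * (x * (w * x))" by (simp add: mult.assoc)
  also have "\<dots> = x" using c1 c3 by (simp add: mult.assoc)
  finally show "x * (w * (a * (w * x))) = x" .
  have "a * (w * (x * (w * (a * w)))) = a * (w * (x * (w * (x * (w * (a * (w * (a * w))))))))"
    using c3 by simp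
  also have "\<dots> = (a * (w * (x * (w * x)))) * (w * (a * (w * (a * w))))" by (simp add: mult.assoc)
  also have "\<dots> = a * w" using c1 c3 by (simp add: mult.assoc)
  finally show "a * (w * (x * (w * (a * w)))) = a * w" .
  show "a * w * (x * w) * (x * w) = x * w"
    using c1 by (metis mult.assoc)
qed

lemma unique_gcEP:
  fixes st :: "'a::real_normed_algebra_1 \<Rightarrow> 'a" and a w x y :: 'a
  assumes stm: "\<And>u v. st (u * v) = st v * st u"
    and core: "w_core_inv st w a x"
    and g: "w_gcEP_inv st w a y"
  shows "y = x"
proof -
  define A where "A = a * w"
  define X where "X = x * w"
  have c1: "a * (w * (x * (w * x))) = x" using core unfolding w_core_inv_def
    by (simp add: power2_eq_square mult.assoc)
  have c2: "st (w * a * w * x) = w * a * w * x" using core unfolding w_core_inv_def by simp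
  have c3: "x * (w * (a * (w * (a * w)))) = a * w" using core unfolding w_core_inv_def
    by (simp add: power2_eq_square mult.assoc)
  have y1: "a * (w * (y * (w * y))) = y" using g unfolding w_gcEP_inv_def
    by (simp add: power2_eq_square mult.assoc)
  have y2: "st (w * a * w * y) = w * a * w * y" using g unfolding w_gcEP_inv_def by simp
  have ylim: "(\<lambda>n. root n (norm ((a * w)^n - (y * w) * (a * w)^(n+1)))) \<longlonglongrightarrow> 0"
    using g unfolding w_gcEP_inv_def by simp
  note f = core_facts[OF c1 c3]
  define Px where "Px = w * a * w * x"
  define Py where "Py = w * a * w * y"
  have yy: "a * w * x * w * y = y"
  proof -
    have "a * w * x * w * y = a * w * x * w * (a * (w * (y * (w * y))))"
      by (simp only: y1)
    also have "\<dots> = (a * (w * (x * (w * (a * w))))) * (y * (w * y))"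
      by (simp add: mult.assoc)
    also have "\<dots> = y" using f(2) y1 by (simp add: mult.assoc)
    finally show ?thesis .
  qed
  have PxPy: "Px * Py = Py"
  proof -
    have "Px * Py = w * (a * (w * (x * (w * (a * w))))) * y" unfolding Px_def Py_def by (simp add: mult.assoc)
    also have "\<dots> = Py" using f(2) unfolding Py_def by (simp add: mult.assoc)
    finally show ?thesis .
  qed
  have PyPx: "Py * Px = Py"
  proof -
    have "st (Px * Py) = st Py" using PxPy by simp
    thus ?thesis using stm[of Px Py] c2 y2 unfolding Px_def Py_def by simp
  qed
  have AXX: "A * (X * (X ^ n * x)) = X ^ n * x" for n
  proof (cases n)
    case 0 thus ?thesis using c1 unfolding A_def X_def by (simp add: mult.assoc)
  next
    case (Suc m)
    have "A * (X * (X ^ n * x)) = (A * X * X) * (X ^ m * x)"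
      using Suc by (simp add: mult.assoc)
    also have "A * X * X = X" using f(3) unfolding A_def X_def .
    finally show ?thesis using Suc by (simp add: mult.assoc)
  qed
  have AnXn: "A ^ n * (X ^ n * x) = x" for n
  proof (induction n)
    case 0 show ?case by simp
  next
    case (Suc n)
    have "A ^ Suc n * (X ^ Suc n * x) = A ^ n * (A * (X * (X ^ n * x)))"
      by (simp add: power_Suc power_Suc2 power_commutes mult.assoc[symmetric])
    also have "\<dots> = x" using AXX Suc by simp
    finally show ?case .
  qed
  define D where "D n = A ^ n - (y * w) * A ^ (n+1)" for n
  have key: "Px - Py * Px = w * A * (D n * (X ^ n * x))" for n
  proof -
    have "w * A * (D n * (X ^ n * x)) = w * A * (A ^ n * (X ^ n * x)) - (w * A * y) * (w * A * (A ^ n * (X ^ n * x)))"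
      unfolding D_def by (simp add: algebra_simps power_Suc2)
    also have "\<dots> = w * A * x - (w * A * y) * (w * A * x)" using AnXn by simp
    also have "\<dots> = Px - Py * Px" unfolding Px_def Py_def A_def by (simp add: mult.assoc)
    finally show ?thesis by simp
  qed
  have bd: "norm (Px - Py * Px) \<le> (norm (w * A) * norm x) * norm (D n) * norm X ^ n" for n
  proof -
    have "norm (Px - Py * Px) \<le> norm (w * A) * (norm (D n) * (norm (X ^ n) * norm x))"
    proof -
      have "norm (Px - Py * Px) = norm (w * A * (D n * (X ^ n * x)))" using key[of n] by simp
      also have "\<dots> \<le> norm (w * A) * norm (D n * (X ^ n * x))" by (rule norm_mult_ineq)
      also have "\<dots> \<le> norm (w * A) * (norm (D n) * norm (X ^ n * x))"
        by (intro mult_left_mono norm_mult_ineq) auto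
      also have "\<dots> \<le> norm (w * A) * (norm (D n) * (norm (X ^ n) * norm x))"
        by (intro mult_left_mono norm_mult_ineq) auto
      finally show ?thesis .
    qed
    also have "\<dots> \<le> norm (w * A) * (norm (D n) * (norm X ^ n * norm x))"
      by (intro mult_left_mono mult_right_mono norm_power_ineq) auto
    finally show ?thesis by (simp add: algebra_simps)
  qed
  have "norm (Px - Py * Px) = 0"
    by (rule analytic_zero[OF _ _ _ _ _ bd]) (use ylim in \<open>auto simp: D_def A_def\<close>)
  hence "Px = Py * Px" by simp
  hence PxPy': "Px = Py" using PyPx by simp
  have "x = x * Px" using f(1) unfolding Px_def by (simp add: mult.assoc)
  also have "\<dots> = x * Py" using PxPy' by simp
  also have "\<dots> = x * (w * (a * (w * (a * (w * (y * (w * y)))))))"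
    unfolding Py_def by (simp only: y1 mult.assoc)
  also have "\<dots> = (x * (w * (a * (w * (a * w))))) * (y * (w * y))"
    by (simp add: mult.assoc)
  also have "\<dots> = y" using c3 y1 by (simp add: mult.assoc)
  finally show ?thesis by simp
qed

theorem corollary2p2:
  fixes scC :: "complex \<Rightarrow> 'a::{real_normed_algebra_1,banach} \<Rightarrow> 'a"
    and st :: "'a \<Rightarrow> 'a" and a w x :: 'a
  assumes "complex_banach_star_algebra scC st"
    and "w_core_inv st w a x"
  shows "(\<exists>y. w_gcEP_inv st w a y) \<and> w_gcEP st w a = x"
proof -
  have stm: "\<And>u v. st (u * v) = st v * st u"
    using assms(1) unfolding complex_banach_star_algebra_def by blast
  have c3: "x * (w * (a * (w * (a * w)))) = a * w" using assms(2) unfolding w_core_inv_def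
    by (simp add: power2_eq_square mult.assoc)
  have z: "(a * w) ^ n - (x * w) * (a * w) ^ (n+1) = 0" if n1: "n \<ge> 1" for n
  proof -
    obtain m where m: "n = Suc m" using n1 by (cases n) auto
    have "(x * w) * (a * w) ^ (n+1) = (x * (w * (a * (w * (a * w))))) * (a * w) ^ m"
      using m by (simp add: power_Suc mult.assoc)
    also have "\<dots> = (a * w) ^ n" using c3 m by (simp add: power_Suc mult.assoc)
    finally show ?thesis by simp
  qed
  have lim: "(\<lambda>n. root n (norm ((a * w)^n - (x * w) * (a * w)^(n+1)))) \<longlonglongrightarrow> 0"
  proof -
    have "(\<lambda>n. root n (norm ((a * w)^n - (x * w) * (a * w)^(n+1)))) = (\<lambda>n. 0)"
    proof
      fix n show "root n (norm ((a * w)^n - (x * w) * (a * w)^(n+1))) = 0"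
        using z[of n] by (cases n) auto
    qed
    thus ?thesis by simp
  qed
  have gx: "w_gcEP_inv st w a x"
    using assms(2) lim unfolding w_core_inv_def w_gcEP_inv_def by simp
  have "w_gcEP st w a = x"
    unfolding w_gcEP_def
    by (rule the_equality[of "w_gcEP_inv st w a" x, OF gx]) (rule unique_gcEP[OF stm assms(2)])
  thus ?thesis using gx by blast
qed

end
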